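(* There is an absolute constant $C>0$ such that for every $d\ge1$, a standard Gaussian random vector $\mathbf{w}\sim\mathcal{N}(0,I_d)$ satisfies $\mathbb{E}\|\mathbf{w}\|_T\le C\sqrt{d}$.
   Context: For $\mathbf{v}\in\mathbb{R}^d$ define \[\|\mathbf{v}\|_T^2=\sup_{\emptyset\ne S\subseteq[d]}\log^4(2d/|S|)\sum_{j\in S}v_j^2.\] *)

theory Defs
  imports "HOL-Probability.Probability"
begin

(* Vectors in R^d are functions nat => real on the index set {..<d} (= [d], shifted by 1). *)

definition normT :: "nat \<Rightarrow> (nat \<Rightarrow> real) \<Rightarrow> real" where
  "normT d v = sqrt (Max {(ln (2 * real d / real (card S))) ^ 4 * (\<Sum>j\<in>S. (v j)\<^sup>2)
                          | S. S \<subseteq> {..<d} \<and> S \<noteq> {}})"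

definition std_gaussian :: "nat \<Rightarrow> (nat \<Rightarrow> real) measure" where
  "std_gaussian d = PiM {..<d} (\<lambda>_. density lborel std_normal_density)"

end

theory Submission
  imports Defs
begin

lemma moment10: "(\<integral>\<^sup>+ x. ennreal (x ^ 10) \<partial>density lborel std_normal_density) = 945"
proof -
  have h: "has_bochner_integral lborel (\<lambda>x. std_normal_density x * x ^ (2 * 5)) (fact (2 * 5) / (2^5 * fact 5))"
    by (rule std_normal_moment_even)
  have v: "(fact (2 * 5) / (2^5 * fact 5) :: real) = 945" by (simp add: fact_numeral)
  have "(\<integral>\<^sup>+ x. ennreal (x ^ 10) \<partial>density lborel std_normal_density)
     = (\<integral>\<^sup>+ x. ennreal (std_normal_density x * x ^ (2*5)) \<partial>lborel)"
    by (subst nn_integral_density) (auto simp: ennreal_mult' normal_density_nonneg mult.commute)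
  also have "\<dots> = ennreal (integral\<^sup>L lborel (\<lambda>x. std_normal_density x * x ^ (2 * 5)))"
    using h by (intro nn_integral_eq_integral) (auto simp: has_bochner_integral_iff normal_density_nonneg zero_le_even_power)
  also have "\<dots> = 945" using h v by (simp add: has_bochner_integral_iff)
  finally show ?thesis .
qed

lemma comp10:
  assumes "j < d"
  shows "(\<integral>\<^sup>+ w. ennreal (w j ^ 10) \<partial>std_gaussian d) = 945"
proof -
  have ps: "\<And>i. prob_space (density lborel std_normal_density)" by (simp add: prob_space_normal_density)
  have "(\<integral>\<^sup>+ w. ennreal (w j ^ 10) \<partial>std_gaussian d)
     = (\<integral>\<^sup>+ x. ennreal (x ^ 10) \<partial>distr (std_gaussian d) (density lborel std_normal_density) (\<lambda>w. w j))"
    unfolding std_gaussian_def using assms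
    by (subst nn_integral_distr) (auto intro: measurable_component_singleton)
  also have "\<dots> = 945" unfolding std_gaussian_def
    using assms by (subst distr_PiM_component) (auto simp: ps moment10)
  finally show ?thesis .
qed

lemma pw: fixes L a :: real assumes "0 \<le> L" "0 \<le> a" shows "L^4 * a \<le> L^5 + a^5"
proof (cases "a \<le> L")
  case True
  have "L^4 * a \<le> L^4 * L" using True by (intro mult_left_mono) (auto simp: assms)
  moreover have "L^4 * L = L^5" by (simp add: eval_nat_numeral)
  moreover have "0 \<le> a^5" using assms by simp
  ultimately show ?thesis by linarith
next
  case False
  have "L^4 \<le> a^4" using False assms by (intro power_mono) auto
  then have "L^4 * a \<le> a^4 * a" using assms by (intro mult_right_mono) auto
  moreover have "a^4 * a = a^5" by (simp add: eval_nat_numeral)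
  moreover have "0 \<le> L^5" using assms by simp
  ultimately show ?thesis by linarith
qed

lemma ln5: fixes y :: real assumes "y \<ge> 1" shows "(ln y)^5 \<le> 3125 * y"
proof -
  have yp: "y > 0" using assms by simp
  have "ln (y powr (1/5)) \<le> y powr (1/5) - 1" using yp by (intro ln_le_minus_one) auto
  then have "ln y / 5 \<le> y powr (1/5)" using yp by (simp add: ln_powr)
  then have a: "ln y \<le> 5 * y powr (1/5)" by simp
  have "0 \<le> ln y" using assms by simp
  then have "(ln y)^5 \<le> (5 * y powr (1/5))^5" using a by (intro power_mono) auto
  also have "\<dots> = 3125 * (y powr (1/5))^5" by (simp add: power_mult_distrib)
  also have "(y powr (1/5))^5 = y" using yp by (simp add: powr_powr flip: powr_realpow)
  finally show ?thesis by simp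
qed

lemma setbound:
  fixes v :: "nat \<Rightarrow> real"
  assumes "S \<subseteq> {..<d}" "S \<noteq> {}"
  shows "(ln (2 * real d / real (card S))) ^ 4 * (\<Sum>j\<in>S. (v j)\<^sup>2) \<le> 6250 * real d + (\<Sum>j<d. (v j)^10)"
proof -
  have fin: "finite S" using assms finite_subset by blast
  have k: "card S \<ge> 1" using fin assms by (simp add: Suc_le_eq card_gt_0_iff)
  have kd: "card S \<le> d" using card_mono[OF finite_lessThan assms(1)] by simp
  define L where "L = ln (2 * real d / real (card S))"
  have q: "2 * real d / real (card S) \<ge> 1" using k kd by (simp add: field_simps)
  have L0: "0 \<le> L" unfolding L_def using q by simp
  have "L^4 * (\<Sum>j\<in>S. (v j)\<^sup>2) = (\<Sum>j\<in>S. L^4 * (v j)\<^sup>2)" by (simp add: sum_distrib_left)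
  also have "\<dots> \<le> (\<Sum>j\<in>S. L^5 + ((v j)\<^sup>2)^5)" by (intro sum_mono pw L0) auto
  also have "\<dots> = real (card S) * L^5 + (\<Sum>j\<in>S. (v j)^10)" by (simp add: sum.distrib flip: power_mult)
  also have "real (card S) * L^5 \<le> 6250 * real d"
  proof -
    have "L^5 \<le> 3125 * (2 * real d / real (card S))" unfolding L_def using q by (rule ln5)
    then have "real (card S) * L^5 \<le> real (card S) * (3125 * (2 * real d / real (card S)))"
      by (intro mult_left_mono) auto
    also have "\<dots> = 6250 * real d" using k by (simp add: field_simps)
    finally show ?thesis .
  qed
  also have "(\<Sum>j\<in>S. (v j)^10) \<le> (\<Sum>j<d. (v j)^10)"
    by (intro sum_mono2 assms) (auto simp: zero_le_even_power)
  finally show ?thesis unfolding L_def by simp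
qed

lemma normT_bound:
  fixes v :: "nat \<Rightarrow> real" assumes "d \<ge> 1"
  shows "normT d v \<le> (6251 * real d + (\<Sum>j<d. (v j)^10)) / (2 * sqrt (real d))"
proof -
  define A where "A = {(ln (2 * real d / real (card S))) ^ 4 * (\<Sum>j\<in>S. (v j)\<^sup>2) | S. S \<subseteq> {..<d} \<and> S \<noteq> {}}"
  define Y where "Y = 6250 * real d + (\<Sum>j<d. (v j)^10)"
  have "A = (\<lambda>S. (ln (2 * real d / real (card S))) ^ 4 * (\<Sum>j\<in>S. (v j)\<^sup>2)) ` {S. S \<subseteq> {..<d} \<and> S \<noteq> {}}"
    unfolding A_def by auto
  moreover have "finite {S. S \<subseteq> {..<d} \<and> S \<noteq> {}}" by simp
  ultimately have finA: "finite A" by simp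
  have "{0} \<subseteq> {..<d} \<and> {0::nat} \<noteq> {}" using assms by auto
  then have neA: "A \<noteq> {}" unfolding A_def by blast
  have "\<forall>a\<in>A. a \<le> Y"
  proof
    fix a assume "a \<in> A"
    then obtain S where S: "S \<subseteq> {..<d}" "S \<noteq> {}"
      "a = (ln (2 * real d / real (card S))) ^ 4 * (\<Sum>j\<in>S. (v j)\<^sup>2)" unfolding A_def by blast
    show "a \<le> Y" unfolding S(3) Y_def by (rule setbound[OF S(1,2)])
  qed
  then have "Max A \<le> Y" using Max_le_iff[OF finA neA] by blast
  then have s: "normT d v \<le> sqrt Y" unfolding normT_def A_def[symmetric] by simp
  have Y0: "0 \<le> Y" unfolding Y_def by (intro add_nonneg_nonneg sum_nonneg) (auto simp: zero_le_even_power)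
  have dp: "sqrt (real d) > 0" using assms by simp
  have "2 * sqrt Y * sqrt (real d) \<le> Y + real d"
  proof -
    have "0 \<le> (sqrt Y - sqrt (real d))^2" by simp
    then show ?thesis using Y0 by (simp add: power2_eq_square algebra_simps)
  qed
  then have "sqrt Y \<le> (Y + real d) / (2 * sqrt (real d))" using dp by (simp add: field_simps)
  then show ?thesis using s unfolding Y_def by (simp add: algebra_simps)
qed

lemma meas10: assumes "j < d"
  shows "(\<lambda>w. ennreal (w j ^ 10)) \<in> borel_measurable (std_gaussian d)"
proof -
  have "(\<lambda>w. w j) \<in> measurable (std_gaussian d) (density lborel std_normal_density)"
    unfolding std_gaussian_def using assms by (intro measurable_component_singleton) auto
  then have "(\<lambda>w. w j) \<in> borel_measurable (std_gaussian d)" by simp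
  then show ?thesis by measurable
qed

theorem lemma4p3:
  shows "\<exists>C>0. \<forall>d\<ge>1. (\<integral>\<^sup>+ w. ennreal (normT d w) \<partial>std_gaussian d) \<le> ennreal (C * sqrt (real d))"
proof (intro exI[of _ 3598] conjI allI impI)
  fix d :: nat assume d: "d \<ge> 1"
  interpret P: prob_space "std_gaussian d" unfolding std_gaussian_def
    by (intro prob_space_PiM) (simp add: prob_space_normal_density)
  define c where "c = 1 / (2 * sqrt (real d))"
  have c0: "c \<ge> 0" unfolding c_def by simp
  have pw: "ennreal (normT d w) \<le> ennreal (6251 * real d * c) + (\<Sum>j<d. ennreal c * ennreal (w j ^ 10))" for w
  proof -
    have "normT d w \<le> 6251 * real d * c + (\<Sum>j<d. c * w j ^ 10)"
      using normT_bound[OF d, of w] by (simp add: c_def sum_divide_distrib add_divide_distrib)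
    then have "ennreal (normT d w) \<le> ennreal (6251 * real d * c + (\<Sum>j<d. c * w j ^ 10))"
      by (rule ennreal_leI)
    also have "\<dots> = ennreal (6251 * real d * c) + (\<Sum>j<d. ennreal c * ennreal (w j ^ 10))"
    proof -
      have s: "(\<Sum>j<d. ennreal c * ennreal (w j ^ 10)) = ennreal (\<Sum>j<d. c * w j ^ 10)"
        using c0 by (simp add: ennreal_mult[symmetric] zero_le_even_power)
      show ?thesis unfolding s using c0
        by (intro ennreal_plus) (auto intro!: sum_nonneg simp: zero_le_even_power)
    qed
    finally show ?thesis .
  qed
  have "(\<integral>\<^sup>+ w. ennreal (normT d w) \<partial>std_gaussian d)
      \<le> (\<integral>\<^sup>+ w. ennreal (6251 * real d * c) + (\<Sum>j<d. ennreal c * ennreal (w j ^ 10)) \<partial>std_gaussian d)"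
    by (intro nn_integral_mono pw)
  also have "\<dots> = ennreal (6251 * real d * c) + (\<Sum>j<d. ennreal c * (\<integral>\<^sup>+ w. ennreal (w j ^ 10) \<partial>std_gaussian d))"
  proof -
    have m: "\<And>j. j \<in> {..<d} \<Longrightarrow> (\<lambda>w. ennreal c * ennreal (w j ^ 10)) \<in> borel_measurable (std_gaussian d)"
      using meas10 by (auto intro: borel_measurable_times_ennreal)
    have ms: "(\<lambda>w. \<Sum>j<d. ennreal c * ennreal (w j ^ 10)) \<in> borel_measurable (std_gaussian d)"
      using m by (rule borel_measurable_sum)
    have e: "(\<integral>\<^sup>+ w. (\<Sum>j<d. ennreal c * ennreal (w j ^ 10)) \<partial>std_gaussian d)
      = (\<Sum>j<d. ennreal c * (\<integral>\<^sup>+ w. ennreal (w j ^ 10) \<partial>std_gaussian d))"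
      using m by (subst nn_integral_sum) (auto intro!: sum.cong nn_integral_cmult meas10)
    show ?thesis using ms e by (subst nn_integral_add) (auto simp: P.emeasure_space_1)
  qed
  also have "\<dots> = ennreal (6251 * real d * c) + (\<Sum>j<d. ennreal c * 945)"
    by (simp add: comp10)
  also have "\<dots> = ennreal (6251 * real d * c + real d * c * 945)"
  proof -
    have "(\<Sum>j<d. ennreal c * 945) = (\<Sum>j<d. ennreal (c * 945))"
      using c0 by (simp add: ennreal_mult)
    also have "\<dots> = ennreal (\<Sum>j<d. c * 945)" using c0 by (intro sum_ennreal) simp
    also have "(\<Sum>j<d. c * 945) = real d * c * 945" by simp
    finally have E: "(\<Sum>j<d. ennreal c * 945) = ennreal (real d * c * 945)" .
    show ?thesis unfolding E using c0 by (intro ennreal_plus[symmetric]) auto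
  qed
  also have "6251 * real d * c + real d * c * 945 = 3598 * sqrt (real d)"
  proof -
    have "real d = sqrt (real d) * sqrt (real d)" by simp
    then have "real d * c = sqrt (real d) / 2" unfolding c_def using d
      by (simp add: field_simps)
    then show ?thesis by (simp add: algebra_simps)
  qed
  finally show "(\<integral>\<^sup>+ w. ennreal (normT d w) \<partial>std_gaussian d) \<le> ennreal (3598 * sqrt (real d))" .
qed simp

end
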